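(* Let $X$ be an abelian variety over a field $K$ of characteristic different from $2$, $G=\bar\rho_{2,X}(\mathrm{Gal}(K))\subset\mathrm{Aut}_{\mathbb F_2}(X_2)$, and assume $\dim X=2$, $G\cong\mathbb A_5$, $X_2$ is a simple $G$-module, and $\mathrm{End}_G(X_2)\cong\mathbb F_4$. Then $X_2$, viewed as a vector space over $\mathbb F_4=\mathrm{End}_G(X_2)$, is a very simple $G$-module over $\mathbb F_4$.
   Context: $X_2$ is the group of points of order dividing $2$ of $X$ over an algebraic closure of $K$, with Galois action $\bar\rho_{2,X}$. Definition: for a vector space $V$ over a field $k$ and a representation $\rho:G\to\mathrm{Aut}_k(V)$, the $G$-module $V$ is very simple if for every $k$-subalgebra $R\subset\mathrm{End}_k(V)$ containing $\mathrm{Id}_V$ with $\rho(\sigma)R\rho(\sigma)^{-1}\subset R$ for all $\sigma\in G$, either $R=k\cdot\mathrm{Id}_V$ or $R=\mathrm{End}_k(V)$. *)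

theory Defs
  imports "HOL-Algebra.Sym_Groups" "HOL-Algebra.Ring"
begin

text \<open>X_2 is modelled as an abelian group 'v (written additively) killed by 2,
  i.e. an F_2-vector space; F_2-linear maps are exactly additive maps.\<close>

definition additive :: "('v::ab_group_add \<Rightarrow> 'v) \<Rightarrow> bool" where
  "additive f \<longleftrightarrow> (\<forall>x y. f (x + y) = f x + f y)"

definition Aut_F2 :: "('v::ab_group_add \<Rightarrow> 'v) set" where
  "Aut_F2 = {f. bij f \<and> additive f}"

definition fun_group :: "('v \<Rightarrow> 'v) set \<Rightarrow> ('v \<Rightarrow> 'v) monoid" where
  "fun_group G = \<lparr>carrier = G, mult = (\<circ>), one = id\<rparr>"

definition is_subgroup_Aut :: "('v::ab_group_add \<Rightarrow> 'v) set \<Rightarrow> bool" where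
  "is_subgroup_Aut G \<longleftrightarrow> G \<subseteq> Aut_F2 \<and> id \<in> G \<and>
     (\<forall>g\<in>G. \<forall>h\<in>G. g \<circ> h \<in> G) \<and> (\<forall>g\<in>G. inv_into UNIV g \<in> G)"

text \<open>F_2-subspaces of V are exactly the subgroups.\<close>
definition F2_subspace :: "'v::ab_group_add set \<Rightarrow> bool" where
  "F2_subspace W \<longleftrightarrow> 0 \<in> W \<and> (\<forall>x\<in>W. \<forall>y\<in>W. x + y \<in> W) \<and> (\<forall>x\<in>W. - x \<in> W)"

definition simple_module :: "('v::ab_group_add \<Rightarrow> 'v) set \<Rightarrow> bool" where
  "simple_module G \<longleftrightarrow> (UNIV :: 'v set) \<noteq> {0} \<and>
     (\<forall>W. F2_subspace W \<and> (\<forall>g\<in>G. g ` W \<subseteq> W) \<longrightarrow> W = {0} \<or> W = UNIV)"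

definition End_G :: "('v::ab_group_add \<Rightarrow> 'v) set \<Rightarrow> ('v \<Rightarrow> 'v) set" where
  "End_G G = {f. additive f \<and> (\<forall>g\<in>G. f \<circ> g = g \<circ> f)}"

definition End_G_ring :: "('v::ab_group_add \<Rightarrow> 'v) set \<Rightarrow> ('v \<Rightarrow> 'v) ring" where
  "End_G_ring G = \<lparr>carrier = End_G G, mult = (\<circ>), one = id,
                   zero = (\<lambda>_. 0), add = (\<lambda>f h x. f x + h x)\<rparr>"

text \<open>Very simple modules. K is a field (record), sc its scalar action on V,
  G a set of invertible (K-linear) maps giving the representation.\<close>
definition End_K :: "('k, 'm) ring_scheme \<Rightarrow> ('k \<Rightarrow> 'v::ab_group_add \<Rightarrow> 'v) \<Rightarrow> ('v \<Rightarrow> 'v) set" where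
  "End_K K sc = {f. additive f \<and> (\<forall>c\<in>carrier K. \<forall>x. f (sc c x) = sc c (f x))}"

definition K_subalgebra :: "('k, 'm) ring_scheme \<Rightarrow> ('k \<Rightarrow> 'v::ab_group_add \<Rightarrow> 'v)
    \<Rightarrow> ('v \<Rightarrow> 'v) set \<Rightarrow> bool" where
  "K_subalgebra K sc R \<longleftrightarrow> R \<subseteq> End_K K sc \<and> id \<in> R \<and>
     (\<forall>r\<in>R. \<forall>s\<in>R. (\<lambda>x. r x + s x) \<in> R) \<and>
     (\<forall>c\<in>carrier K. \<forall>r\<in>R. (\<lambda>x. sc c (r x)) \<in> R) \<and>
     (\<forall>r\<in>R. \<forall>s\<in>R. r \<circ> s \<in> R)"

definition very_simple :: "('k, 'm) ring_scheme \<Rightarrow> ('k \<Rightarrow> 'v::ab_group_add \<Rightarrow> 'v)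
    \<Rightarrow> ('v \<Rightarrow> 'v) set \<Rightarrow> bool" where
  "very_simple K sc G \<longleftrightarrow>
     (\<forall>R. K_subalgebra K sc R \<and> (\<forall>g\<in>G. \<forall>r\<in>R. g \<circ> r \<circ> inv_into UNIV g \<in> R) \<longrightarrow>
        R = {(\<lambda>x. sc c x) | c. c \<in> carrier K} \<or> R = End_K K sc)"

end

theory Submission
  imports Defs "HOL-Algebra.Solvable_Groups"
begin


lemma additive_0: "additive f \<Longrightarrow> f 0 = 0"
  unfolding additive_def by (metis add_cancel_right_right)

lemma fun_group_group:
  assumes "is_subgroup_Aut G"
  shows "group (fun_group G)"
proof (rule groupI)
  show "\<And>x y. x \<in> carrier (fun_group G) \<Longrightarrow> y \<in> carrier (fun_group G) \<Longrightarrow>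
      x \<otimes>\<^bsub>fun_group G\<^esub> y \<in> carrier (fun_group G)"
    using assms by (auto simp: fun_group_def is_subgroup_Aut_def)
  show "\<one>\<^bsub>fun_group G\<^esub> \<in> carrier (fun_group G)"
    using assms by (auto simp: fun_group_def is_subgroup_Aut_def)
  show "\<And>x y z. x \<in> carrier (fun_group G) \<Longrightarrow> y \<in> carrier (fun_group G) \<Longrightarrow> z \<in> carrier (fun_group G) \<Longrightarrow>
       x \<otimes>\<^bsub>fun_group G\<^esub> y \<otimes>\<^bsub>fun_group G\<^esub> z = x \<otimes>\<^bsub>fun_group G\<^esub> (y \<otimes>\<^bsub>fun_group G\<^esub> z)"
    by (auto simp: fun_group_def)
  show "\<And>x. x \<in> carrier (fun_group G) \<Longrightarrow> \<one>\<^bsub>fun_group G\<^esub> \<otimes>\<^bsub>fun_group G\<^esub> x = x"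
    by (auto simp: fun_group_def)
  show "\<And>x. x \<in> carrier (fun_group G) \<Longrightarrow> \<exists>y\<in>carrier (fun_group G). y \<otimes>\<^bsub>fun_group G\<^esub> x = \<one>\<^bsub>fun_group G\<^esub>"
  proof -
    fix x assume "x \<in> carrier (fun_group G)"
    then have "x \<in> G" "inv_into UNIV x \<in> G" "bij x" using assms
      by (auto simp: fun_group_def is_subgroup_Aut_def Aut_F2_def)
    then show "\<exists>y\<in>carrier (fun_group G). y \<otimes>\<^bsub>fun_group G\<^esub> x = \<one>\<^bsub>fun_group G\<^esub>"
      by (intro bexI[of _ "inv_into UNIV x"]) (auto simp: fun_group_def bij_def inv_o_cancel)
  qed
qed

lemma fun_group_inv:
  assumes "is_subgroup_Aut G" "g \<in> G"
  shows "inv\<^bsub>fun_group G\<^esub> g = inv_into UNIV g"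
proof -
  interpret group "fun_group G" by (rule fun_group_group[OF assms(1)])
  have "bij g" "inv_into UNIV g \<in> G" using assms by (auto simp: is_subgroup_Aut_def Aut_F2_def)
  then show ?thesis
    using assms by (intro inv_equality) (auto simp: fun_group_def bij_def inv_o_cancel)
qed

lemma perfect_G:
  assumes "is_subgroup_Aut G" "fun_group G \<cong> alt_group 5"
  shows "derived (fun_group G) G = G"
proof -
  interpret FG: group "fun_group G" by (rule fun_group_group[OF assms(1)])
  obtain h where h: "h \<in> iso (fun_group G) (alt_group 5)" using assms(2) unfolding is_iso_def by blast
  interpret gh: group_hom "fun_group G" "alt_group 5" h
    using h alt_group_is_group FG.is_group by (auto simp: group_hom_def group_hom_axioms_def iso_iff)
  have img: "h ` G = carrier (alt_group 5)" and inj: "inj_on h G"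
    using h by (auto simp: iso_iff fun_group_def)
  have "derived (alt_group 5) (h ` G) = h ` derived (fun_group G) G"
    by (rule gh.derived_img) (simp add: fun_group_def)
  then have eq: "h ` derived (fun_group G) G = h ` G"
    using img derived_alt_group_const[of 5] by simp
  have sub: "derived (fun_group G) G \<subseteq> G"
    using FG.derived_incl[OF _ FG.subgroup_self] by (simp add: fun_group_def)
  show ?thesis using inj_on_image_eq_iff[OF inj sub order_refl] eq by simp
qed

lemma two_perm_comm:
  assumes "finite X" "card X \<le> 2"
    and "\<And>x. x \<in> X \<Longrightarrow> p x \<in> X" "\<And>x. x \<in> X \<Longrightarrow> p' x \<in> X"
    and "\<And>x. x \<in> X \<Longrightarrow> q x \<in> X" "\<And>x. x \<in> X \<Longrightarrow> q' x \<in> X"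
    and "\<And>x. x \<in> X \<Longrightarrow> p' (p x) = x" "\<And>x. x \<in> X \<Longrightarrow> p (p' x) = x"
    and "\<And>x. x \<in> X \<Longrightarrow> q' (q x) = x" "\<And>x. x \<in> X \<Longrightarrow> q (q' x) = x"
    and "x \<in> X"
  shows "p (q (p' (q' x))) = x"
proof -
  obtain a b where X: "X \<subseteq> {a, b}"
  proof (cases "X = {}")
    case True then show ?thesis using that by blast
  next
    case False
    then obtain a where a: "a \<in> X" by blast
    show ?thesis
    proof (cases "X - {a} = {}")
      case True then show ?thesis using that[of a a] by blast
    next
      case False
      then obtain b where b: "b \<in> X" "b \<noteq> a" by blast
      have "card {a, b} \<le> card X" using a b assms(1) by (intro card_mono) auto
      then have "X = {a, b}" using a b assms by (intro card_subset_eq[symmetric]) auto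
      then show ?thesis using that by blast
    qed
  qed
  show ?thesis using X assms(3-11) by (smt (verit) insert_iff singleton_iff subset_iff)
qed

lemma perfect_action:
  assumes sg: "is_subgroup_Aut G" and A5: "fun_group G \<cong> alt_group 5"
    and fin: "finite X" "card X \<le> 2"
    and cl: "\<And>g x. g \<in> G \<Longrightarrow> x \<in> X \<Longrightarrow> \<alpha> g x \<in> X"
    and comp: "\<And>g h x. g \<in> G \<Longrightarrow> h \<in> G \<Longrightarrow> x \<in> X \<Longrightarrow> \<alpha> (g \<circ> h) x = \<alpha> g (\<alpha> h x)"
    and idd: "\<And>x. x \<in> X \<Longrightarrow> \<alpha> id x = x"
    and g: "g \<in> G" and x: "x \<in> X"
  shows "\<alpha> g x = x"
proof -
  interpret FG: group "fun_group G" by (rule fun_group_group[OF sg])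
  have invG: "\<And>g. g \<in> G \<Longrightarrow> inv_into UNIV g \<in> G \<and> inv_into UNIV g \<circ> g = id \<and> g \<circ> inv_into UNIV g = id"
    using sg by (auto simp: is_subgroup_Aut_def Aut_F2_def bij_def inv_o_cancel surj_iff)
  have invX: "\<alpha> (inv_into UNIV g) (\<alpha> g x) = x" "\<alpha> g (\<alpha> (inv_into UNIV g) x) = x"
    if "g \<in> G" "x \<in> X" for g x
    using comp[of "inv_into UNIV g" g x] comp[of g "inv_into UNIV g" x] invG[OF that(1)] that idd
    by auto
  define H where "H = {g \<in> G. \<forall>x\<in>X. \<alpha> g x = x}"
  have sub: "subgroup H (fun_group G)"
  proof (rule FG.subgroupI)
    show "H \<subseteq> carrier (fun_group G)" by (auto simp: H_def fun_group_def)
    have "id \<in> G" using sg by (auto simp: is_subgroup_Aut_def)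
    then show "H \<noteq> {}" using idd by (auto simp: H_def)
    show "inv\<^bsub>fun_group G\<^esub> a \<in> H" if "a \<in> H" for a
      using that invG invX fun_group_inv[OF sg] by (auto simp: H_def) (metis)
    show "a \<otimes>\<^bsub>fun_group G\<^esub> b \<in> H" if "a \<in> H" "b \<in> H" for a b
      using that comp sg by (auto simp: H_def fun_group_def is_subgroup_Aut_def)
  qed
  have "derived_set (fun_group G) G \<subseteq> H"
  proof
    fix c assume "c \<in> derived_set (fun_group G) G"
    then obtain a b where ab: "a \<in> G" "b \<in> G"
      and c: "c = a \<circ> b \<circ> inv_into UNIV a \<circ> inv_into UNIV b"
      using fun_group_inv[OF sg] by (auto simp: fun_group_def)
    have cG: "c \<in> G" using ab invG sg c by (auto simp: is_subgroup_Aut_def)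
    have "\<alpha> c y = y" if y: "y \<in> X" for y
    proof -
      have "\<alpha> c y = \<alpha> a (\<alpha> b (\<alpha> (inv_into UNIV a) (\<alpha> (inv_into UNIV b) y)))"
        unfolding c using ab invG sg y cl
        by (simp add: comp is_subgroup_Aut_def)
      also have "\<dots> = y"
        by (rule two_perm_comm[OF fin]) (use ab invG cl invX y in auto)
      finally show ?thesis .
    qed
    then show "c \<in> H" using cG by (auto simp: H_def)
  qed
  then have "derived (fun_group G) G \<subseteq> H"
    unfolding derived_def by (rule FG.generate_subgroup_incl[OF _ sub])
  then show ?thesis using perfect_G[OF sg A5] g x by (auto simp: H_def)
qed




locale cor_setup =
  fixes G :: "('v::ab_group_add \<Rightarrow> 'v) set"
  assumes two: "\<And>x::'v. x + x = 0"
    and dim2: "card (UNIV :: 'v set) = 2 ^ (2 * 2)"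
    and sg: "is_subgroup_Aut G"
    and A5: "fun_group G \<cong> alt_group 5"
    and simple: "simple_module G"
    and fld: "field (End_G_ring G)"
    and c4: "card (carrier (End_G_ring G)) = 4"
begin

abbreviation "F \<equiv> End_G G"
abbreviation "EK \<equiv> End_K (End_G_ring G) (\<lambda>e v. e v)"
abbreviation ginv :: "('v \<Rightarrow> 'v) \<Rightarrow> 'v \<Rightarrow> 'v" where "ginv g \<equiv> inv_into UNIV g"
definition line :: "'v \<Rightarrow> 'v set" where "line v = (\<lambda>e. e v) ` F"

lemma neg[simp]: "- x = (x::'v)"
  using two[of x] by (simp add: neg_eq_iff_add_eq_0)

lemma eq_iff_sum0: "(x::'v) + y = 0 \<longleftrightarrow> x = y"
  by (metis add_diff_cancel_left' diff_add_cancel neg two diff_conv_add_uminus)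

lemma finV[simp]: "finite (UNIV :: 'v set)"
  using dim2 card.infinite by fastforce

lemma cardV: "card (UNIV :: 'v set) = 16" using dim2 by simp

lemma cardF: "card F = 4" using c4 by (simp add: End_G_ring_def)

lemma finF: "finite F" using cardF card.infinite by fastforce

lemma Gbij: "g \<in> G \<Longrightarrow> bij g" and Gadd: "g \<in> G \<Longrightarrow> additive g"
  and Ginv: "g \<in> G \<Longrightarrow> ginv g \<in> G" and Gcomp: "g \<in> G \<Longrightarrow> h \<in> G \<Longrightarrow> g \<circ> h \<in> G"
  and Gid: "id \<in> G"
  using sg by (auto simp: is_subgroup_Aut_def Aut_F2_def)

lemma Ginv1[simp]: "g \<in> G \<Longrightarrow> ginv g (g x) = x" and Ginv2[simp]: "g \<in> G \<Longrightarrow> g (ginv g x) = x"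
  using Gbij by (auto simp: bij_def surj_f_inv_f)

lemma add_apply: "additive f \<Longrightarrow> f (x + y) = f x + f y" by (simp add: additive_def)

lemma additive_comp: "additive f \<Longrightarrow> additive g \<Longrightarrow> additive (f \<circ> g)"
  by (simp add: additive_def)
lemma additive_sum: "additive f \<Longrightarrow> additive g \<Longrightarrow> additive (\<lambda>x. f x + g x)"
  by (simp add: additive_def algebra_simps)

lemma F_iff: "e \<in> F \<longleftrightarrow> additive e \<and> (\<forall>g\<in>G. \<forall>x. e (g x) = g (e x))"
  by (auto simp: End_G_def fun_eq_iff)

lemma F_G: "e \<in> F \<Longrightarrow> g \<in> G \<Longrightarrow> e (g x) = g (e x)" by (simp add: F_iff)
lemma F_add: "e \<in> F \<Longrightarrow> additive e" by (simp add: F_iff)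
lemma F_id: "id \<in> F" and F_zero: "(\<lambda>_. 0) \<in> F"
  by (auto simp: F_iff additive_def additive_0[OF Gadd])
lemma F_sum: "a \<in> F \<Longrightarrow> b \<in> F \<Longrightarrow> (\<lambda>x. a x + b x) \<in> F"
  by (auto simp: F_iff additive_sum add_apply Gadd)
lemma F_comp: "a \<in> F \<Longrightarrow> b \<in> F \<Longrightarrow> a \<circ> b \<in> F"
  by (auto simp: F_iff additive_comp)

lemma F_comm: assumes "a \<in> F" "b \<in> F" shows "a (b x) = b (a x)"
proof -
  interpret field "End_G_ring G" by (rule fld)
  have "a \<otimes>\<^bsub>End_G_ring G\<^esub> b = b \<otimes>\<^bsub>End_G_ring G\<^esub> a"
    using assms by (intro m_comm) (auto simp: End_G_ring_def)
  then show ?thesis by (simp add: End_G_ring_def fun_eq_iff)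
qed

lemma F_inv: assumes "a \<in> F" "a \<noteq> (\<lambda>_. 0)"
  obtains a' where "a' \<in> F" "\<And>x. a' (a x) = x" "\<And>x. a (a' x) = x"
proof -
  interpret field "End_G_ring G" by (rule fld)
  have "a \<in> Units (End_G_ring G)" using assms field_Units by (auto simp: End_G_ring_def)
  then obtain a' where "a' \<in> F" "a' \<circ> a = id" "a \<circ> a' = id"
    by (auto simp: Units_def End_G_ring_def)
  then show ?thesis using that by (metis comp_apply id_apply)
qed

lemma EK_iff: "f \<in> EK \<longleftrightarrow> additive f \<and> (\<forall>c\<in>F. \<forall>x. f (c x) = c (f x))"
  by (simp add: End_K_def End_G_ring_def)

lemma F_EK: "e \<in> F \<Longrightarrow> e \<in> EK"
  using F_comm by (auto simp: EK_iff F_add)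

lemma G_EK: "g \<in> G \<Longrightarrow> g \<in> EK"
  using F_G by (metis EK_iff Gadd)

lemma additive_inv: assumes "g \<in> G" shows "additive (ginv g)"
  using Gadd[OF Ginv[OF assms]] .

lemma Ginv_F: "g \<in> G \<Longrightarrow> c \<in> F \<Longrightarrow> ginv g (c x) = c (ginv g x)"
  using F_G[of c "ginv g"] Ginv by auto

lemma zero_ap: "additive f \<Longrightarrow> f 0 = 0" by (rule additive_0)

end


context cor_setup begin

lemma F_zero_at: assumes "v \<noteq> 0" "e \<in> F" "e v = 0" shows "e = (\<lambda>_. 0)"
proof (rule ccontr)
  assume "e \<noteq> (\<lambda>_. 0)"
  then obtain a' where "a' \<in> F" "\<And>x. a' (e x) = x" using F_inv assms(2) by metis
  then have "v = a' 0" using assms(3) by metis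
  also have "\<dots> = 0" using \<open>a' \<in> F\<close> F_add additive_0 by blast
  finally show False using assms(1) by simp
qed

lemma F_eq_at: assumes "v \<noteq> 0" "a \<in> F" "b \<in> F" "a v = b v" shows "a = b"
proof -
  have "(\<lambda>x. a x + b x) = (\<lambda>_. 0)"
    using F_zero_at[OF assms(1) F_sum[OF assms(2,3)]] assms(4) two by simp
  then show ?thesis by (simp add: fun_eq_iff eq_iff_sum0)
qed

lemma line_mem: "v \<in> line v"
  unfolding line_def using F_id by (metis id_apply image_eqI)

lemma line_memI: "e \<in> F \<Longrightarrow> e v \<in> line v" by (simp add: line_def)

lemma indep: assumes "v \<noteq> 0" "w \<notin> line v" "a \<in> F" "b \<in> F" "a v + b w = 0"
  shows "a = (\<lambda>_. 0) \<and> b = (\<lambda>_. 0)"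
proof -
  have bz: "b = (\<lambda>_. 0)"
  proof (rule ccontr)
    assume "b \<noteq> (\<lambda>_. 0)"
    then obtain b' where b': "b' \<in> F" "\<And>x. b' (b x) = x" using F_inv assms(4) by metis
    have "b w = a v" using assms(5) eq_iff_sum0 by metis
    then have "w = (b' \<circ> a) v" using b' by (metis comp_apply)
    then have "w \<in> line v" using F_comp[OF b'(1) assms(3)] line_memI by metis
    then show False using assms(2) by simp
  qed
  then have "a v = 0" using assms(5) by simp
  then show ?thesis using F_zero_at assms bz by blast
qed

lemma uniq: assumes "v \<noteq> 0" "w \<notin> line v" "a \<in> F" "b \<in> F" "a' \<in> F" "b' \<in> F"
  and "a v + b w = a' v + b' w"
  shows "a = a' \<and> b = b'"
proof -
  have "(\<lambda>x. a x + a' x) v + (\<lambda>x. b x + b' x) w = (a v + b w) + (a' v + b' w)"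
    by (simp add: algebra_simps)
  also have "\<dots> = 0" using assms(7) eq_iff_sum0 by metis
  finally have "(\<lambda>x. a x + a' x) = (\<lambda>_. 0) \<and> (\<lambda>x. b x + b' x) = (\<lambda>_. 0)"
    using indep[OF assms(1,2) F_sum F_sum] assms by blast
  then show ?thesis by (auto simp: fun_eq_iff eq_iff_sum0)
qed

lemma span: assumes "v \<noteq> 0" "w \<notin> line v" shows "\<exists>a\<in>F. \<exists>b\<in>F. x = a v + b w"
proof -
  let ?m = "\<lambda>(a, b). a v + b w"
  have inj: "inj_on ?m (F \<times> F)"
    using uniq[OF assms] by (auto simp: inj_on_def)
  have "card (?m ` (F \<times> F)) = 16"
    using card_image[OF inj] cardF by (simp add: card_cartesian_product)
  then have "?m ` (F \<times> F) = UNIV"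
    using cardV by (intro card_subset_eq) auto
  then have "x \<in> ?m ` (F \<times> F)" by simp
  then obtain p where "p \<in> F \<times> F" "x = ?m p" by blast
  then show ?thesis by auto
qed

lemma determined: assumes "v \<noteq> 0" "w \<notin> line v" "f \<in> EK" "f' \<in> EK" "f v = f' v" "f w = f' w"
  shows "f = f'"
proof
  fix x
  obtain a b where ab: "a \<in> F" "b \<in> F" "x = a v + b w" using span[OF assms(1,2)] by blast
  have "f x = a (f v) + b (f w)" using assms(3) ab by (simp add: EK_iff add_apply)
  also have "\<dots> = f' x" using assms(4) ab assms(5,6) by (simp add: EK_iff add_apply)
  finally show "f x = f' x" .
qed

lemma line_card: "card (line v) \<le> 4"
  unfolding line_def using card_image_le[OF finF] cardF by metis

lemma line_ne_UNIV: "line v \<noteq> UNIV"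
proof
  assume "line v = UNIV" then show False using line_card[of v] cardV by simp
qed

lemma exists_nonzero: "\<exists>v::'v. v \<noteq> 0"
proof (rule ccontr)
  assume "\<not> ?thesis"
  then have "(UNIV::'v set) = {0}" by auto
  then have "card (UNIV::'v set) = card {0::'v}" by (rule arg_cong)
  then show False using cardV by simp
qed

lemma exists_indep: "\<exists>w. w \<notin> line v"
  using line_ne_UNIV by blast

lemma line_F2: "F2_subspace (line v)"
  unfolding F2_subspace_def line_def
proof (intro conjI ballI)
  show "0 \<in> (\<lambda>e. e v) ` F" using F_zero by force
  fix x y assume "x \<in> (\<lambda>e. e v) ` F" "y \<in> (\<lambda>e. e v) ` F"
  then obtain a b where "a \<in> F" "b \<in> F" "x = a v" "y = b v" by blast
  then show "x + y \<in> (\<lambda>e. e v) ` F" using F_sum by force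
next
  fix x assume "x \<in> (\<lambda>e. e v) ` F" then show "- x \<in> (\<lambda>e. e v) ` F" by simp
qed

lemma line_G: assumes "g \<in> G" shows "g ` line v = line (g v)"
  unfolding line_def image_image using F_G[OF _ assms] by (intro image_cong) auto

lemma line_eq: assumes "v \<noteq> 0" "w \<noteq> 0" "w \<in> line v" shows "line w = line v"
proof -
  obtain e where e: "e \<in> F" "w = e v" using assms(3) by (auto simp: line_def)
  have "e \<noteq> (\<lambda>_. 0)" using assms(2) e by auto
  then obtain e' where e': "e' \<in> F" "\<And>x. e' (e x) = x" using F_inv e(1) by metis
  show ?thesis
  proof
    show "line w \<subseteq> line v" using e F_comp by (auto simp: line_def) (metis comp_apply image_eqI)
    show "line v \<subseteq> line w"
    proof
      fix x assume "x \<in> line v"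
      then obtain a where "a \<in> F" "x = a v" by (auto simp: line_def)
      then have "x = (a \<circ> e') w" using e e' by simp
      then show "x \<in> line w" using F_comp[OF \<open>a \<in> F\<close> e'(1)] line_memI by metis
    qed
  qed
qed

lemma line_zero: "line 0 = {0}"
proof -
  have "(\<lambda>e. e 0) ` F = (\<lambda>e. 0) ` F" by (intro image_cong) (auto simp: F_add additive_0)
  then show ?thesis unfolding line_def using F_zero image_constant by metis
qed

end



locale cor_R = cor_setup G for G :: "('v::ab_group_add \<Rightarrow> 'v) set" +
  fixes R :: "('v \<Rightarrow> 'v) set"
  assumes KS: "K_subalgebra (End_G_ring G) (\<lambda>e v. e v) R"
    and Gst: "\<forall>g\<in>G. \<forall>r\<in>R. g \<circ> r \<circ> inv_into UNIV g \<in> R"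
    and nonF: "\<not> R \<subseteq> End_G G"
begin

lemma R_EK: "r \<in> R \<Longrightarrow> r \<in> EK" and R_id: "id \<in> R"
  and R_add: "r \<in> R \<Longrightarrow> s \<in> R \<Longrightarrow> (\<lambda>x. r x + s x) \<in> R"
  and R_scal: "c \<in> F \<Longrightarrow> r \<in> R \<Longrightarrow> (\<lambda>x. c (r x)) \<in> R"
  and R_comp: "r \<in> R \<Longrightarrow> s \<in> R \<Longrightarrow> r \<circ> s \<in> R"
  using KS by (auto simp: K_subalgebra_def End_G_ring_def)

lemma F_R: "c \<in> F \<Longrightarrow> c \<in> R"
  using R_scal[OF _ R_id] by (simp add: id_def)

lemma R_additive: "r \<in> R \<Longrightarrow> additive r" using R_EK EK_iff by blast
lemma R_lin: "r \<in> R \<Longrightarrow> c \<in> F \<Longrightarrow> r (c x) = c (r x)" using R_EK EK_iff by blast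
lemma R_0: "r \<in> R \<Longrightarrow> r 0 = 0" using R_additive additive_0 by blast

lemma R_conj': assumes "g \<in> G" "r \<in> R" shows "ginv g \<circ> r \<circ> g \<in> R"
proof -
  have "ginv g \<circ> r \<circ> ginv (ginv g) \<in> R" using Gst Ginv[OF assms(1)] assms(2) by blast
  then show ?thesis using inv_inv_eq[OF Gbij[OF assms(1)]] by simp
qed

definition stab :: "'v set \<Rightarrow> bool" where "stab L \<longleftrightarrow> (\<forall>r\<in>R. r ` L \<subseteq> L)"
definition S :: "'v set set" where "S = {L. \<exists>v. v \<noteq> 0 \<and> L = line v \<and> stab L}"

lemma stable_eig: assumes "stab (line v)" "r \<in> R" obtains a where "a \<in> F" "r v = a v"
proof -
  have "r v \<in> line v" using assms line_mem by (auto simp: stab_def)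
  then show ?thesis using that by (auto simp: line_def)
qed

lemma F_cancel: assumes "a \<in> F" "a \<noteq> (\<lambda>_. 0)" "a \<circ> b = a \<circ> c" shows "b = c"
proof
  fix x
  obtain a' where "\<And>x. a' (a x) = x" using F_inv assms(1,2) by metis
  then show "b x = c x" using assms(3) by (metis comp_apply)
qed

lemma three:
  assumes v: "v \<noteq> 0" "stab (line v)" and w: "w \<noteq> 0" "stab (line w)" and u: "u \<noteq> 0" "stab (line u)"
    and d: "line v \<noteq> line w" "line v \<noteq> line u" "line w \<noteq> line u"
  shows False
proof -
  have wv: "w \<notin> line v" using line_eq[OF v(1) w(1)] d by blast
  obtain a b where ab: "a \<in> F" "b \<in> F" "u = a v + b w" using span[OF v(1) wv] by blast
  have a0: "a \<noteq> (\<lambda>_. 0)"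
  proof
    assume "a = (\<lambda>_. 0)"
    then have "u \<in> line w" using ab line_memI by simp
    then show False using line_eq[OF w(1) u(1)] d by simp
  qed
  have b0: "b \<noteq> (\<lambda>_. 0)"
  proof
    assume "b = (\<lambda>_. 0)"
    then have "u \<in> line v" using ab line_memI by simp
    then show False using line_eq[OF v(1) u(1)] d by simp
  qed
  obtain r where r: "r \<in> R" "r \<notin> F" using nonF by blast
  obtain \<alpha> where al: "\<alpha> \<in> F" "r v = \<alpha> v" using stable_eig[OF v(2) r(1)] by blast
  obtain \<beta> where be: "\<beta> \<in> F" "r w = \<beta> w" using stable_eig[OF w(2) r(1)] by blast
  obtain \<gamma> where ga: "\<gamma> \<in> F" "r u = \<gamma> u" using stable_eig[OF u(2) r(1)] by blast
  have "r u = r (a v) + r (b w)" using ab(3) add_apply[OF R_additive[OF r(1)]] by simp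
  also have "\<dots> = a (r v) + b (r w)" using R_lin[OF r(1)] ab by simp
  finally have 1: "(a \<circ> \<alpha>) v + (b \<circ> \<beta>) w = r u" using al be by simp
  have "\<gamma> u = \<gamma> (a v) + \<gamma> (b w)" using ab(3) add_apply[OF F_add[OF ga(1)]] by simp
  also have "\<dots> = (a \<circ> \<gamma>) v + (b \<circ> \<gamma>) w" using F_comm ab ga by simp
  finally have "(a \<circ> \<alpha>) v + (b \<circ> \<beta>) w = (a \<circ> \<gamma>) v + (b \<circ> \<gamma>) w" using 1 ga by simp
  then have "a \<circ> \<alpha> = a \<circ> \<gamma> \<and> b \<circ> \<beta> = b \<circ> \<gamma>"
    by (rule uniq[OF v(1) wv F_comp[OF ab(1) al(1)] F_comp[OF ab(2) be(1)] F_comp[OF ab(1) ga(1)] F_comp[OF ab(2) ga(1)]])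
  then have "\<alpha> = \<gamma>" "\<beta> = \<gamma>" using F_cancel a0 b0 ab by blast+
  then have "r = \<gamma>" using determined[OF v(1) wv R_EK[OF r(1)] F_EK[OF ga(1)]] al be by simp
  then show False using r ga by simp
qed


lemma S_card: "card S \<le> 2"
proof (rule ccontr)
  assume "\<not> card S \<le> 2"
  then have "3 \<le> card S" by simp
  then obtain T where T: "T \<subseteq> S" "card T = 3" using obtain_subset_with_card_n by metis
  then obtain L1 L2 L3 where T3: "T = {L1, L2, L3}" "L1 \<noteq> L2" "L2 \<noteq> L3" "L1 \<noteq> L3"
    using card_3_iff by metis
  then have L: "L1 \<in> S" "L2 \<in> S" "L3 \<in> S" using T(1) by auto
  obtain v where v: "v \<noteq> 0" "L1 = line v" "stab (line v)" using L(1) unfolding S_def by blast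
  obtain w where w: "w \<noteq> 0" "L2 = line w" "stab (line w)" using L(2) unfolding S_def by blast
  obtain u where u: "u \<noteq> 0" "L3 = line u" "stab (line u)" using L(3) unfolding S_def by blast
  show False
    by (rule three[OF v(1,3) w(1,3) u(1,3)]) (use T3 v w u in simp_all)
qed

lemma S_fin: "finite S"
  by (rule finite_subset[OF subset_UNIV]) (simp add: Finite_Set.finite_set)

lemma g_nonzero: "g \<in> G \<Longrightarrow> v \<noteq> 0 \<Longrightarrow> g v \<noteq> 0"
  using additive_0[OF Gadd] Ginv1 by metis

lemma S_G: assumes "g \<in> G" "L \<in> S" shows "g ` L \<in> S"
proof -
  obtain v where v: "v \<noteq> 0" "L = line v" "stab L" using assms(2) S_def by blast
  have "stab (g ` L)" unfolding stab_def
  proof (intro ballI subsetI)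
    fix r y assume r: "r \<in> R" and "y \<in> r ` g ` L"
    then obtain x where x: "x \<in> L" "y = r (g x)" by blast
    have "(ginv g \<circ> r \<circ> g) ` L \<subseteq> L" using R_conj'[OF assms(1) r] v(3) unfolding stab_def by blast
    then have "(ginv g \<circ> r \<circ> g) x \<in> L" using x(1) by blast
    moreover have "y = g ((ginv g \<circ> r \<circ> g) x)" using x assms(1) by simp
    ultimately show "y \<in> g ` L" by blast
  qed
  then show ?thesis using line_G[OF assms(1)] v g_nonzero[OF assms(1) v(1)] by (auto simp: S_def)
qed

lemma S_empty: "S = {}"
proof (rule ccontr)
  assume "S \<noteq> {}"
  then obtain L where L: "L \<in> S" by blast
  have fixd: "g ` L = L" if "g \<in> G" for g
    using perfect_action[of G S "\<lambda>g L. g ` L" g L, OF sg A5 S_fin S_card _ _ _ that L]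
    by (simp add: S_G image_comp)
  obtain v where v: "v \<noteq> 0" "L = line v" using L S_def by blast
  have "F2_subspace L" using v line_F2 by simp
  then have "L = {0} \<or> L = UNIV" using simple fixd unfolding simple_module_def by auto
  then show False using v line_mem[of v] line_ne_UNIV by auto
qed

lemma stab_F: assumes "stab W" "e \<in> F" "x \<in> W" shows "e x \<in> W"
  using assms F_R unfolding stab_def by blast

lemma Rsimple: assumes "F2_subspace W" "stab W" "W \<noteq> {0}" shows "W = UNIV"
proof -
  obtain v where v: "v \<in> W" "v \<noteq> 0" using assms(1,3) unfolding F2_subspace_def by blast
  have lv: "line v \<subseteq> W"
  proof
    fix x assume "x \<in> line v"
    then obtain e where "e \<in> F" "x = e v" by (auto simp: line_def)
    then show "x \<in> W" using stab_F[OF assms(2)] v(1) by blast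
  qed
  show ?thesis
  proof (cases "W \<subseteq> line v")
    case True
    then have "W = line v" using lv by blast
    then have "line v \<in> S" using v assms(2) by (auto simp: S_def)
    then show ?thesis using S_empty by simp
  next
    case False
    then obtain w where w: "w \<in> W" "w \<notin> line v" by blast
    have "x \<in> W" for x
    proof -
      obtain a b where ab: "a \<in> F" "b \<in> F" "x = a v + b w" using span[OF v(2) w(2)] by blast
      moreover have "a v \<in> W" "b w \<in> W" using stab_F[OF assms(2)] ab v w by blast+
      ultimately show "x \<in> W" using assms(1) unfolding F2_subspace_def by blast
    qed
    then show ?thesis by blast
  qed
qed


definition C :: "('v \<Rightarrow> 'v) set" where "C = {f \<in> EK. \<forall>r\<in>R. \<forall>x. f (r x) = r (f x)}"

lemma C_EK: "f \<in> C \<Longrightarrow> f \<in> EK" and C_R: "f \<in> C \<Longrightarrow> r \<in> R \<Longrightarrow> f (r x) = r (f x)"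
  by (auto simp: C_def)

lemma C_additive: "f \<in> C \<Longrightarrow> additive f" using C_EK EK_iff by blast
lemma C_lin: "f \<in> C \<Longrightarrow> c \<in> F \<Longrightarrow> f (c x) = c (f x)" using C_EK EK_iff by blast

lemma F_C: assumes "e \<in> F" shows "e \<in> C"
  using assms F_EK R_lin by (auto simp: C_def) (metis R_lin)

lemma C_sum: assumes "f \<in> C" "h \<in> C" shows "(\<lambda>x. f x + h x) \<in> C"
  using assms unfolding C_def EK_iff
  by (auto simp: additive_sum add_apply R_additive F_add)

lemma C_comp: assumes "f \<in> C" "h \<in> C" shows "f \<circ> h \<in> C"
  using assms unfolding C_def EK_iff by (auto simp: additive_comp)

lemma schur: assumes "f \<in> C" "f \<noteq> (\<lambda>_. 0)" shows "inj f"
proof -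
  define K where "K = {x. f x = 0}"
  have add: "additive f" using C_additive[OF assms(1)] .
  have "F2_subspace K" unfolding F2_subspace_def K_def
    using add additive_0[OF add] by (auto simp: add_apply)
  moreover have "stab K" unfolding stab_def K_def
    using C_R[OF assms(1)] R_0 by auto
  moreover have "K \<noteq> UNIV" using assms(2) by (auto simp: K_def fun_eq_iff)
  ultimately have K0: "K = {0}" using Rsimple by blast
  show ?thesis
  proof (rule injI)
    fix x y assume "f x = f y"
    then have "f (x + y) = 0" using add by (simp add: add_apply eq_iff_sum0)
    then have "x + y = 0" using K0 by (auto simp: K_def)
    then show "x = y" by (simp add: eq_iff_sum0)
  qed
qed

lemma C_eq_at: assumes "v \<noteq> 0" "f \<in> C" "h \<in> C" "f v = h v" shows "f = h"
proof (rule ccontr)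
  assume "f \<noteq> h"
  then have "(\<lambda>x. f x + h x) \<noteq> (\<lambda>_. 0)" by (auto simp: fun_eq_iff eq_iff_sum0)
  then have "inj (\<lambda>x. f x + h x)" using schur C_sum assms by blast
  moreover have "(\<lambda>x. f x + h x) v = (\<lambda>x. f x + h x) 0"
    using assms additive_0[OF C_additive[OF assms(2)]] additive_0[OF C_additive[OF assms(3)]] by (simp add: two)
  ultimately show False using assms(1) by (auto dest: injD)
qed

lemma C_conj: assumes "f \<in> C" "g \<in> G" shows "g \<circ> f \<circ> ginv g \<in> C"
proof -
  have "additive (g \<circ> f \<circ> ginv g)"
    using Gadd[OF assms(2)] C_additive[OF assms(1)] additive_inv[OF assms(2)] by (simp add: additive_comp)
  moreover have "(g \<circ> f \<circ> ginv g) (c x) = c ((g \<circ> f \<circ> ginv g) x)" if "c \<in> F" for c x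
    using that Ginv_F[OF assms(2)] C_lin[OF assms(1)] F_G[OF _ assms(2)] by simp
  moreover have "(g \<circ> f \<circ> ginv g) (r x) = r ((g \<circ> f \<circ> ginv g) x)" if r: "r \<in> R" for r x
  proof -
    have r': "ginv g \<circ> r \<circ> g \<in> R" using R_conj'[OF assms(2) r] .
    have "ginv g (r x) = (ginv g \<circ> r \<circ> g) (ginv g x)" using assms(2) by simp
    then have "(g \<circ> f \<circ> ginv g) (r x) = g ((ginv g \<circ> r \<circ> g) (f (ginv g x)))"
      using C_R[OF assms(1) r'] by simp
    also have "\<dots> = r ((g \<circ> f \<circ> ginv g) x)" using assms(2) by simp
    finally show ?thesis .
  qed
  ultimately show ?thesis by (auto simp: C_def EK_iff)
qed


lemma twoL: "(z::'v) + (z + w) = w"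
  by (metis add.assoc add.left_neutral two)

lemma C_in_F: assumes "f \<in> C" shows "f \<in> F"
proof (rule ccontr)
  assume nf: "f \<notin> F"
  obtain v :: 'v where v: "v \<noteq> 0" using exists_nonzero by blast
  show False
  proof (cases "f v \<in> line v")
    case True
    then obtain l where l: "l \<in> F" "f v = l v" by (auto simp: line_def)
    have "f = l" using C_eq_at[OF v assms F_C[OF l(1)] l(2)] .
    then show False using nf l by simp
  next
    case False
    define w where "w = f v"
    have wv: "w \<notin> line v" using False w_def by simp
    obtain p q where pq: "p \<in> F" "q \<in> F" "f w = p v + q w" using span[OF v wv] by blast
    define f' where "f' = (\<lambda>y. q y + f y)"
    have f'C: "f' \<in> C" unfolding f'_def by (rule C_sum[OF F_C[OF pq(2)] assms])
    have af: "additive f" using C_additive[OF assms] .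
    have ff: "f \<circ> f = (\<lambda>y. p y + q (f y))"
      by (rule C_eq_at[OF v C_comp[OF assms assms] C_sum[OF F_C[OF pq(1)] C_comp[OF F_C[OF pq(2)] assms, unfolded comp_def]]])
        (use pq(3) in \<open>simp add: w_def\<close>)
    have ffy: "f (f y) = p y + q (f y)" for y using fun_cong[OF ff, of y] by simp
    have conj: "g \<circ> f \<circ> ginv g = f \<or> g \<circ> f \<circ> ginv g = f'" if g: "g \<in> G" for g
    proof -
      define x where "x = g \<circ> f \<circ> ginv g"
      have xC: "x \<in> C" using C_conj[OF assms g] x_def by simp
      have ax: "additive x" using C_additive[OF xC] .
      obtain a b where ab: "a \<in> F" "b \<in> F" "x v = a v + b w" using span[OF v wv] by blast
      have xe: "x = (\<lambda>y. a y + b (f y))"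
        by (rule C_eq_at[OF v xC C_sum[OF F_C[OF ab(1)] C_comp[OF F_C[OF ab(2)] assms, unfolded comp_def]]])
          (use ab(3) in \<open>simp add: w_def\<close>)
      have xf: "x (f y) = f (x y)" for y
        unfolding xe by (simp add: add_apply[OF af] C_lin[OF assms ab(1)] C_lin[OF assms ab(2)])
      have xx: "x (x y) = p y + q (x y)" for y
      proof -
        have "x (x y) = g (f (f (ginv g y)))" by (simp add: x_def g)
        also have "\<dots> = g (p (ginv g y) + q (f (ginv g y)))" by (simp add: ffy)
        also have "\<dots> = p y + q (x y)"
          using g by (simp add: x_def add_apply[OF Gadd[OF g]] F_G[OF pq(1) g, symmetric] F_G[OF pq(2) g, symmetric])
        finally show ?thesis .
      qed
      define h1 where "h1 = (\<lambda>y. x y + f y)"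
      define h2 where "h2 = (\<lambda>y. x y + f' y)"
      have h1C: "h1 \<in> C" using C_sum[OF xC assms] h1_def by simp
      have prod: "h1 (h2 y) = 0" for y
        unfolding h1_def h2_def f'_def
        by (simp add: add_apply[OF ax] add_apply[OF af] xx ffy xf C_lin[OF xC pq(2)] C_lin[OF assms pq(2)]
            add_ac two twoL)
      show ?thesis
      proof (cases "h1 = (\<lambda>_. 0)")
        case True
        then have "x y = f y" for y unfolding h1_def by (metis eq_iff_sum0)
        then show ?thesis using x_def by auto
      next
        case False
        then have "inj h1" using schur h1C by blast
        then have "h2 y = 0" for y using prod additive_0[OF C_additive[OF h1C]] by (metis injD)
        then have "x y = f' y" for y unfolding h2_def by (metis eq_iff_sum0)
        then show ?thesis using x_def by auto
      qed
    qed
    have act: "g \<circ> f \<circ> ginv g = f" if g: "g \<in> G" for g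
    proof -
      have fin: "finite {f, f'}" by simp
      have cd: "card {f, f'} \<le> 2" by (simp add: card_insert_if)
      have cl: "h \<circ> y \<circ> ginv h \<in> {f, f'}" if h: "h \<in> G" and y: "y \<in> {f, f'}" for h y
      proof -
        have e: "h \<circ> f' \<circ> ginv h = (\<lambda>z. q z + (h \<circ> f \<circ> ginv h) z)"
          using h by (simp add: fun_eq_iff f'_def add_apply[OF Gadd[OF h]] F_G[OF pq(2) h, symmetric])
        show ?thesis
        proof (cases "h \<circ> f \<circ> ginv h = f")
          case True
          then show ?thesis using y e by (auto simp: f'_def)
        next
          case False
          then have "h \<circ> f \<circ> ginv h = f'" using conj h by blast
          then show ?thesis using y e False by (auto simp: f'_def twoL)
        qed
      qed
      have cp: "(g \<circ> h) \<circ> y \<circ> ginv (g \<circ> h) = g \<circ> (h \<circ> y \<circ> ginv h) \<circ> ginv g"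
        if "g \<in> G" "h \<in> G" "y \<in> {f, f'}" for g h y
        using o_inv_distrib[OF Gbij[OF that(1)] Gbij[OF that(2)]] by (simp add: o_assoc)
      have idd: "id \<circ> y \<circ> ginv id = y" for y by simp
      show ?thesis
        using perfect_action[of G "{f, f'}" "\<lambda>g y. g \<circ> y \<circ> ginv g", OF sg A5 fin cd cl cp idd g]
        by simp
    qed
    have "f \<in> F" unfolding F_iff
    proof (intro conjI ballI allI)
      show "additive f" using af .
      fix g x assume g: "g \<in> G"
      have "(g \<circ> f \<circ> ginv g) (g x) = f (g x)" using act[OF g] by simp
      then show "f (g x) = g (f x)" using g by simp
    qed
    then show False using nf by simp
  qed
qed


lemma EK_sub_R: "EK \<subseteq> R"
proof
  fix f assume f: "f \<in> EK"
  obtain v :: 'v where v: "v \<noteq> 0" using exists_nonzero by blast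
  obtain w where wv: "w \<notin> line v" using exists_indep by blast
  have zR: "(\<lambda>_. 0) \<in> R" using F_R[OF F_zero] .
  define Rv where "Rv = (\<lambda>r. r v) ` R"
  have "F2_subspace Rv" unfolding F2_subspace_def Rv_def
  proof (intro conjI ballI)
    show "0 \<in> (\<lambda>r. r v) ` R" using zR by force
    fix x y assume "x \<in> (\<lambda>r. r v) ` R" "y \<in> (\<lambda>r. r v) ` R"
    then obtain r s where "r \<in> R" "s \<in> R" "x = r v" "y = s v" by blast
    then show "x + y \<in> (\<lambda>r. r v) ` R" using R_add by force
  next
    fix x assume "x \<in> (\<lambda>r. r v) ` R" then show "- x \<in> (\<lambda>r. r v) ` R" by simp
  qed
  moreover have "stab Rv" unfolding stab_def Rv_def
  proof (intro ballI subsetI)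
    fix s y assume "s \<in> R" "y \<in> s ` (\<lambda>r. r v) ` R"
    then obtain r where "r \<in> R" "y = (s \<circ> r) v" by auto
    then show "y \<in> (\<lambda>r. r v) ` R" using R_comp[OF \<open>s \<in> R\<close>] by blast
  qed
  moreover have "Rv \<noteq> {0}"
  proof -
    have "v \<in> Rv" unfolding Rv_def using R_id by (metis id_apply image_eqI)
    then show ?thesis using v by auto
  qed
  ultimately have RvU: "Rv = UNIV" using Rsimple by blast
  define A where "A = {r \<in> R. r v = 0}"
  define Aw where "Aw = (\<lambda>r. r w) ` A"
  have "F2_subspace Aw" unfolding F2_subspace_def Aw_def
  proof (intro conjI ballI)
    show "0 \<in> (\<lambda>r. r w) ` A" using zR unfolding A_def by force
    fix x y assume "x \<in> (\<lambda>r. r w) ` A" "y \<in> (\<lambda>r. r w) ` A"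
    then obtain r s where "r \<in> A" "s \<in> A" "x = r w" "y = s w" by blast
    then show "x + y \<in> (\<lambda>r. r w) ` A" unfolding A_def using R_add by force
  next
    fix x assume "x \<in> (\<lambda>r. r w) ` A" then show "- x \<in> (\<lambda>r. r w) ` A" by simp
  qed
  moreover have "stab Aw" unfolding stab_def Aw_def
  proof (intro ballI subsetI)
    fix s y assume s: "s \<in> R" and "y \<in> s ` (\<lambda>r. r w) ` A"
    then obtain r where r: "r \<in> A" "y = (s \<circ> r) w" by auto
    have "s \<circ> r \<in> A" using r(1) s R_comp R_0 unfolding A_def by auto
    then show "y \<in> (\<lambda>r. r w) ` A" using r(2) by blast
  qed
  moreover have "Aw \<noteq> {0}"
  proof
    assume Aw0: "Aw = {0}"
    have key: "r w = r' w" if "r \<in> R" "r' \<in> R" "r v = r' v" for r r'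
    proof -
      have "(\<lambda>x. r x + r' x) v = 0" using that(3) by (simp add: two)
      then have "(\<lambda>x. r x + r' x) \<in> A" using R_add[OF that(1,2)] unfolding A_def by blast
      then have "(\<lambda>x. r x + r' x) w \<in> Aw" unfolding Aw_def by (rule imageI)
      then have "r w + r' w = 0" using Aw0 by simp
      then show ?thesis by (simp add: eq_iff_sum0)
    qed
    define \<phi> where "\<phi> x = (SOME r. r \<in> R \<and> r v = x) w" for x
    have phi: "\<phi> (r v) = r w" if "r \<in> R" for r
    proof -
      have "\<exists>r'. r' \<in> R \<and> r' v = r v" using that by blast
      then have h: "(SOME r'. r' \<in> R \<and> r' v = r v) \<in> R \<and> (SOME r'. r' \<in> R \<and> r' v = r v) v = r v"
        by (rule someI_ex)
      have "\<phi> (r v) = (SOME r'. r' \<in> R \<and> r' v = r v) w" by (simp add: \<phi>_def)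
      also have "\<dots> = r w" using key[OF conjunct1[OF h] that conjunct2[OF h]] .
      finally show ?thesis .
    qed
    have ex: "\<exists>r\<in>R. x = r v" for x
    proof -
      have "x \<in> Rv" using RvU by simp
      then show ?thesis unfolding Rv_def by blast
    qed
    have phiC: "\<phi> \<in> C"
    proof -
      have "additive \<phi>" unfolding additive_def
      proof (intro allI)
        fix x y
        obtain r where r: "r \<in> R" "x = r v" using ex[of x] by blast
        obtain s where s: "s \<in> R" "y = s v" using ex[of y] by blast
        have "x + y = (\<lambda>z. r z + s z) v" using r s by simp
        then have "\<phi> (x + y) = (\<lambda>z. r z + s z) w" using phi[OF R_add[OF r(1) s(1)]] by simp
        also have "\<dots> = \<phi> x + \<phi> y" using phi[OF r(1)] phi[OF s(1)] r s by simp
        finally show "\<phi> (x + y) = \<phi> x + \<phi> y" .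
      qed
      moreover have Rc: "\<forall>s\<in>R. \<forall>x. \<phi> (s x) = s (\<phi> x)"
      proof (intro ballI allI)
        fix s x assume s: "s \<in> R"
        obtain r where r: "r \<in> R" "x = r v" using ex[of x] by blast
        have "\<phi> (s x) = \<phi> ((s \<circ> r) v)" using r by simp
        also have "\<dots> = (s \<circ> r) w" using phi[OF R_comp[OF s r(1)]] .
        also have "\<dots> = s (\<phi> x)" using phi[OF r(1)] r by simp
        finally show "\<phi> (s x) = s (\<phi> x)" .
      qed
      moreover have "\<forall>c\<in>F. \<forall>x. \<phi> (c x) = c (\<phi> x)" using Rc F_R by blast
      ultimately show ?thesis unfolding C_def EK_iff by blast
    qed
    have "\<phi> \<in> F" by (rule C_in_F[OF phiC])
    moreover have "\<phi> v = w" using phi[OF R_id] by simp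
    ultimately have "w \<in> line v" using line_memI by metis
    then show False using wv by simp
  qed
  ultimately have AwU: "Aw = UNIV" using Rsimple by blast
  have "f v \<in> Rv" using RvU by simp
  then obtain r1 where r1: "r1 \<in> R" "f v = r1 v" unfolding Rv_def by blast
  have "f w + r1 w \<in> Aw" using AwU by simp
  then obtain r2 where r2: "r2 \<in> A" "f w + r1 w = r2 w" unfolding Aw_def by blast
  have rR: "(\<lambda>x. r1 x + r2 x) \<in> R" using R_add r1 r2 unfolding A_def by blast
  have "f = (\<lambda>x. r1 x + r2 x)"
  proof (rule determined[OF v wv f R_EK[OF rR]])
    show "f v = r1 v + r2 v" using r1 r2 by (simp add: A_def)
    show "f w = r1 w + r2 w" using r2(2)[symmetric] by (simp add: add.commute twoL two)
  qed
  then show "f \<in> R" using rR by simp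
qed

end

context cor_setup begin

theorem main: "very_simple (End_G_ring G) (\<lambda>e v. e v) G"
  unfolding very_simple_def
proof (intro allI impI)
  fix R assume asm: "K_subalgebra (End_G_ring G) (\<lambda>e v. e v) R \<and>
      (\<forall>g\<in>G. \<forall>r\<in>R. g \<circ> r \<circ> inv_into UNIV g \<in> R)"
  have scal: "{(\<lambda>x. c x) | c. c \<in> carrier (End_G_ring G)} = F"
    by (auto simp: End_G_ring_def)
  have FR: "F \<subseteq> R"
  proof
    fix c assume "c \<in> F"
    moreover have "\<forall>c\<in>F. \<forall>r\<in>R. (\<lambda>x. c (r x)) \<in> R" "id \<in> R"
      using asm by (simp_all add: K_subalgebra_def End_G_ring_def)
    ultimately have "(\<lambda>x. c (id x)) \<in> R" by blast
    moreover have "(\<lambda>x. c (id x)) = c" by (simp add: fun_eq_iff)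
    ultimately show "c \<in> R" by simp
  qed
  show "R = {(\<lambda>x. c x) | c. c \<in> carrier (End_G_ring G)} \<or> R = EK"
  proof (cases "R \<subseteq> F")
    case True then show ?thesis using scal FR by auto
  next
    case False
    have ax: "cor_R_axioms G R" by (rule cor_R_axioms.intro) (use asm False in blast)+
    interpret cor_R G R by (rule cor_R.intro[OF cor_setup_axioms ax])
    have "R \<subseteq> EK" using R_EK by blast
    then show ?thesis using EK_sub_R by blast
  qed
qed

end


theorem corollary4p2:
  fixes G :: "('v::ab_group_add \<Rightarrow> 'v) set"
  assumes two_torsion: "\<forall>x::'v. x + x = 0"
    and dim2: "card (UNIV :: 'v set) = 2 ^ (2 * 2)"
    and subgrp: "is_subgroup_Aut G"
    and A5: "fun_group G \<cong> alt_group 5"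
    and simple: "simple_module G"
    and F4: "field (End_G_ring G)" "card (carrier (End_G_ring G)) = 4"
  shows "very_simple (End_G_ring G) (\<lambda>e v. e v) G"
proof -
  have "cor_setup G" unfolding cor_setup_def using assms by blast
  then show ?thesis by (rule cor_setup.main)
qed

end
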